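(* Let $k\ge 0$ be an integer, $N_o=2^k$, and let $\mathbf{P}_k=\mathbf{P}^{\otimes k}$ be the $k$-th Kronecker power of $\mathbf{P}=\begin{bmatrix}1&0\\1&1\end{bmatrix}$ over $\mathrm{GF}(2)$ (with $\mathbf{P}_0=[1]$). Let $\mathbf{c}=(c_0,\dots,c_m)\in\{0,1\}^{m+1}$ with $c_0=1$, and fix an arbitrary initial shift-register state $\mathbf{s}=(s_0,\dots,s_{m-1})\in\{0,1\}^m$. For $b\in\{0,1\}$, let $\mathbf{v}^{(b)}=(v_0,\dots,v_{N_o-1})$ be the message vector with $v_0=\dots=v_{N_o-2}=0$ and $v_{N_o-1}=b$, let $\mathbf{u}^{(b)}$ be its convolutional encoding with impulse response $\mathbf{c}$ starting from state $\mathbf{s}$, and let $\boldsymbol{\beta}_b=\mathbf{u}^{(b)}\mathbf{P}_k$. Then $\boldsymbol{\beta}_0\oplus\boldsymbol{\beta}_1=\mathbf{1}$, the all-ones vector of length $N_o$.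
   Context: All arithmetic is over $\mathrm{GF}(2)$; vectors are row vectors and rows/columns of $\mathbf{P}_k$ are indexed $0,\dots,N_o-1$. Convolutional encoding of $\mathbf{v}=(v_0,\dots,v_{N_o-1})$ with impulse response $\mathbf{c}$ from state $\mathbf{s}$ is defined sequentially for $i=0,\dots,N_o-1$: $u_i = c_0 v_i \oplus \bigoplus_{j=1}^{m} c_j s_{j-1}$, after which the state is updated to $\mathbf{s}\leftarrow(v_i,s_0,\dots,s_{m-2})$. (This setting is a "Rev node" of a polarization-adjusted convolutional code: the first $N_o-1$ message bits are frozen to zero and only the last one is an information bit.) *)

theory Defs
  imports Main
begin

text \<open>GF(2) is modelled by bool: True = 1, False = 0, addition is (\<noteq>) (xor),
  multiplication is conjunction.\<close>

definition gf2_sum :: "bool list \<Rightarrow> bool" where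
  "gf2_sum xs = foldr (\<lambda>a b. a \<noteq> b) xs False"

text \<open>The kernel P = [[1,0],[1,1]], indexed from 0.\<close>
definition P_ker :: "nat \<Rightarrow> nat \<Rightarrow> bool" where
  "P_ker i j = (i = 1 \<or> j = 0)"

text \<open>Kronecker power P_k = P^{\<otimes>k} as a 2^k x 2^k matrix (entries for i,j < 2^k);
  P_0 = [1], P_(k+1) = P \<otimes> P_k.\<close>
fun kron_pow :: "nat \<Rightarrow> nat \<Rightarrow> nat \<Rightarrow> bool" where
  "kron_pow 0 i j = True"
| "kron_pow (Suc k) i j =
     (P_ker (i div 2^k) (j div 2^k) \<and> kron_pow k (i mod 2^k) (j mod 2^k))"

definition vec_mat :: "bool list \<Rightarrow> (nat \<Rightarrow> nat \<Rightarrow> bool) \<Rightarrow> nat \<Rightarrow> bool list" where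
  "vec_mat u M n = map (\<lambda>j. gf2_sum (map (\<lambda>i. u ! i \<and> M i j) [0..<n])) [0..<n]"

text \<open>Convolutional encoding with impulse response c = (c_0,...,c_m) (a list of length m+1)
  from state s = (s_0,...,s_{m-1}) (a list of length m):
  u_i = c_0 v_i + sum_{j=1}^m c_j s_{j-1}, then s := (v_i, s_0, ..., s_{m-2}).\<close>
fun conv_enc :: "bool list \<Rightarrow> bool list \<Rightarrow> bool list \<Rightarrow> bool list" where
  "conv_enc c s [] = []"
| "conv_enc c s (v # vs) =
     gf2_sum ((c ! 0 \<and> v) # map (\<lambda>j. c ! j \<and> s ! (j - 1)) [1..<length c])
     # conv_enc c (take (length s) (v # s)) vs"

end

theory Submission
  imports Defs
begin

lemma conv_len: "length (conv_enc c s xs) = length xs"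
  by (induction xs arbitrary: s) auto

lemma conv_app: "\<exists>s'. \<forall>ys. conv_enc c s (xs @ ys) = conv_enc c s xs @ conv_enc c s' ys"
proof (induction xs arbitrary: s)
  case Nil then show ?case by auto
next
  case (Cons x xs)
  obtain s' where "\<forall>ys. conv_enc c (take (length s) (x # s)) (xs @ ys)
      = conv_enc c (take (length s) (x # s)) xs @ conv_enc c s' ys"
    using Cons by blast
  then show ?case by auto
qed

lemma gf2_app: "gf2_sum (xs @ ys) = (gf2_sum xs \<noteq> gf2_sum ys)"
  unfolding gf2_sum_def by (induction xs) auto

lemma gf2_cons: "gf2_sum (a # xs) = (a \<noteq> gf2_sum xs)"
  unfolding gf2_sum_def by simp

lemma kron_last: "kron_pow k (2^k - 1) j"
proof (induction k arbitrary: j)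
  case 0 then show ?case by simp
next
  case (Suc k)
  have p: "(0::nat) < 2^k" by simp
  have eq: "(2 ^ Suc k - 1::nat) = 2^k + (2^k - 1)" using p by simp
  have lt: "(2^k - 1::nat) < 2^k" using p by simp
  have a: "(2 ^ Suc k - 1) div 2^k = (1::nat)"
  proof -
    have "(2^k + (2^k - 1)) div 2^k = (2^k - 1) div 2^k + (1::nat)"
      by (rule div_add_self1) simp
    then show ?thesis unfolding eq using lt by (simp only: div_less)
  qed
  have b: "(2 ^ Suc k - 1) mod 2^k = (2^k - 1::nat)"
  proof -
    have "(2^k + (2^k - 1)) mod 2^k = (2^k - 1) mod (2^k::nat)"
      by (rule mod_add_self1)
    then show ?thesis unfolding eq using lt by (simp only: mod_less)
  qed
  show ?case using a b Suc by (simp add: P_ker_def)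
qed

lemma entry:
  assumes "length A = n"
  shows "gf2_sum (map (\<lambda>i. (A @ [x]) ! i \<and> M i j) [0..<Suc n])
       = (gf2_sum (map (\<lambda>i. A ! i \<and> M i j) [0..<n]) \<noteq> (x \<and> M n j))"
proof -
  have 1: "map (\<lambda>i. (A @ [x]) ! i \<and> M i j) [0..<n] = map (\<lambda>i. A ! i \<and> M i j) [0..<n]"
    using assms by (auto simp: nth_append)
  have 2: "[0..<Suc n] = [0..<n] @ [n]" by simp
  show ?thesis unfolding 2 map_append gf2_app 1 using assms by (simp add: gf2_sum_def nth_append)
qed

lemma vm_len: "length (vec_mat u M n) = n"
  by (simp add: vec_mat_def)

theorem theorem1:
  fixes k m :: nat and c s :: "bool list"
  assumes "length c = m + 1" and "c ! 0" and "length s = m"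
  shows "let N = 2 ^ k;
             v = (\<lambda>b. replicate (N - 1) False @ [b]);
             \<beta> = (\<lambda>b. vec_mat (conv_enc c s (v b)) (kron_pow k) N)
         in map2 (\<noteq>) (\<beta> False) (\<beta> True) = replicate N True"
proof -
  define N :: nat where "N = 2^k"
  have N1: "N = Suc (N - 1)" unfolding N_def by simp
  define A where "A = conv_enc c s (replicate (N - 1) False)"
  have lA: "length A = N - 1" unfolding A_def by (simp add: conv_len)
  obtain s' where s': "\<And>ys. conv_enc c s (replicate (N - 1) False @ ys) = A @ conv_enc c s' ys"
    unfolding A_def using conv_app by blast
  define L where "L = gf2_sum (map (\<lambda>j. c ! j \<and> s' ! (j - 1)) [1..<length c])"
  have u: "conv_enc c s (replicate (N - 1) False @ [b]) = A @ [(b \<noteq> L)]" for b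
    using s' assms(2) by (simp add: L_def gf2_cons)
  have e: "vec_mat (A @ [x]) (kron_pow k) N ! j =
     (gf2_sum (map (\<lambda>i. A ! i \<and> kron_pow k i j) [0..<N - 1]) \<noteq> x)" if "j < N" for x j
    using that entry[OF lA, of x "kron_pow k" j] N1 kron_last[of k j]
    unfolding vec_mat_def N_def by simp
  have "map2 (\<noteq>) (vec_mat (A @ [(False \<noteq> L)]) (kron_pow k) N)
          (vec_mat (A @ [(True \<noteq> L)]) (kron_pow k) N) = replicate N True"
    by (rule nth_equalityI) (auto simp: e vm_len)
  then show ?thesis unfolding Let_def N_def[symmetric] u by simp
qed

end
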